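(* Let $G$ be a finite graph in which every vertex has degree at most $d$. Then $$\tfrac12 PW(G)\le BW(G)\le d\cdot PW(G).$$
   Context: Bubble width: a bubbling of $G$ is an ordering $b_1,\dots,b_N$ of all vertices of $G$. Set $S_i=\{b_1,\dots,b_i\}$, and let $z_i$ be the set of edges with exactly one endpoint in $S_i$. The width of the bubbling is $\max_i|z_i|$. $BW(G)$ is the minimum width over all bubblings of $G$. Path width: a path decomposition of $G$ is a path $T$ (a tree with all nodes of degree at most 2) together with a subset $\tilde t\subseteq V(G)$ assigned to each node $t$ of $T$, such that: (1) for each edge $(v,w)$ of $G$, some subset $\tilde t$ contains both $v$ and $w$; (2) if $v$ lies in $\tilde t_1$ and in $\tilde t_2$, then $v$ lies in every subset on the path between $t_1$ and $t_2$. The width of the decomposition is $\max_t|\tilde t|$ (the number of vertices in the largest subset, with no $-1$). $PW(G)$ is the minimum width over all path decompositions of $G$. *)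

theory Defs
  imports Complex_Main
begin

definition finite_graph :: "'a set \<Rightarrow> ('a \<Rightarrow> 'a \<Rightarrow> bool) \<Rightarrow> bool" where
  "finite_graph V E \<longleftrightarrow> finite V \<and> (\<forall>v w. E v w \<longrightarrow> v \<in> V \<and> w \<in> V)
     \<and> (\<forall>v w. E v w \<longrightarrow> E w v) \<and> (\<forall>v. \<not> E v v)"

definition graph_edges :: "('a \<Rightarrow> 'a \<Rightarrow> bool) \<Rightarrow> 'a set set" where
  "graph_edges E = {{v, w} | v w. E v w}"

definition degree :: "('a \<Rightarrow> 'a \<Rightarrow> bool) \<Rightarrow> 'a \<Rightarrow> nat" where
  "degree E v = card {w. E v w}"

definition is_bubbling :: "'a set \<Rightarrow> 'a list \<Rightarrow> bool" where
  "is_bubbling V bs \<longleftrightarrow> distinct bs \<and> set bs = V"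

definition cut_edges :: "('a \<Rightarrow> 'a \<Rightarrow> bool) \<Rightarrow> 'a set \<Rightarrow> 'a set set" where
  "cut_edges E S = {e \<in> graph_edges E. card (e \<inter> S) = 1}"

text \<open>Width of a bubbling: max over i of |z_i| (i = 0 contributes 0 and only
  matters for the empty graph).\<close>
definition bubbling_width :: "('a \<Rightarrow> 'a \<Rightarrow> bool) \<Rightarrow> 'a list \<Rightarrow> nat" where
  "bubbling_width E bs = Max ((\<lambda>i. card (cut_edges E (set (take i bs)))) ` {0..length bs})"

definition BW :: "'a set \<Rightarrow> ('a \<Rightarrow> 'a \<Rightarrow> bool) \<Rightarrow> nat" where
  "BW V E = (LEAST k. \<exists>bs. is_bubbling V bs \<and> bubbling_width E bs = k)"

text \<open>Path decomposition: the path T is represented by the nonempty list of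
  its bags in path order.\<close>
definition is_path_decomp :: "'a set \<Rightarrow> ('a \<Rightarrow> 'a \<Rightarrow> bool) \<Rightarrow> 'a set list \<Rightarrow> bool" where
  "is_path_decomp V E ts \<longleftrightarrow> ts \<noteq> [] \<and> (\<forall>t \<in> set ts. t \<subseteq> V)
     \<and> (\<forall>v w. E v w \<longrightarrow> (\<exists>t \<in> set ts. v \<in> t \<and> w \<in> t))
     \<and> (\<forall>v i j k. i \<le> j \<and> j \<le> k \<and> k < length ts \<and> v \<in> ts ! i \<and> v \<in> ts ! k
            \<longrightarrow> v \<in> ts ! j)"

definition path_decomp_width :: "'a set list \<Rightarrow> nat" where
  "path_decomp_width ts = Max (card ` set ts)"

definition PW :: "'a set \<Rightarrow> ('a \<Rightarrow> 'a \<Rightarrow> bool) \<Rightarrow> nat" where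
  "PW V E = (LEAST k. \<exists>ts. is_path_decomp V E ts \<and> path_decomp_width ts = k)"

end

theory Submission
  imports Defs
begin

lemma fin_edges:
  assumes "finite_graph V E"
  shows "graph_edges E \<subseteq> Pow V" "finite (graph_edges E)"
proof -
  show "graph_edges E \<subseteq> Pow V" using assms unfolding finite_graph_def graph_edges_def by auto
  then show "finite (graph_edges E)" using assms unfolding finite_graph_def
    by (meson finite_Pow_iff finite_subset)
qed

lemma fin_cut:
  assumes "finite_graph V E"
  shows "finite (cut_edges E S)"
  using fin_edges[OF assms] unfolding cut_edges_def by auto

lemma mem_cut_union:
  assumes "finite_graph V E"
  shows "v \<in> \<Union>(cut_edges E S) \<longleftrightarrow> (\<exists>u. E v u \<and> (v \<in> S \<longleftrightarrow> u \<notin> S))"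
proof
  assume "v \<in> \<Union>(cut_edges E S)"
  then obtain a b where ab: "E a b" "card ({a,b} \<inter> S) = 1" "v \<in> {a,b}"
    unfolding cut_edges_def graph_edges_def by auto
  have ne: "a \<noteq> b" using ab(1) assms unfolding finite_graph_def by auto
  have ex: "(a \<in> S) \<longleftrightarrow> (b \<notin> S)"
    using ab(2) ne by (cases "a \<in> S"; cases "b \<in> S") auto
  show "\<exists>u. E v u \<and> (v \<in> S \<longleftrightarrow> u \<notin> S)"
    using ab ex assms unfolding finite_graph_def by blast
next
  assume "\<exists>u. E v u \<and> (v \<in> S \<longleftrightarrow> u \<notin> S)"
  then obtain u where u: "E v u" "v \<in> S \<longleftrightarrow> u \<notin> S" by blast
  have ne: "v \<noteq> u" using u(1) assms unfolding finite_graph_def by auto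
  have "card ({v,u} \<inter> S) = 1"
    using u(2) ne by (cases "v \<in> S") auto
  then have "{v,u} \<in> cut_edges E S" using u(1) unfolding cut_edges_def graph_edges_def by blast
  then show "v \<in> \<Union>(cut_edges E S)" by blast
qed

lemma card_union_cut:
  assumes "finite_graph V E"
  shows "card (\<Union>(cut_edges E S)) \<le> 2 * card (cut_edges E S)"
proof -
  have "card (\<Union>(cut_edges E S)) \<le> sum card (cut_edges E S)"
    by (rule card_Union_le_sum_card)
  also have "\<dots> \<le> card (cut_edges E S) * 2"
  proof -
    have "card e \<le> 2" if he: "e \<in> cut_edges E S" for e
    proof -
      obtain a b where "e = {a,b}" using he unfolding cut_edges_def graph_edges_def by blast
      then show "card e \<le> 2" by (simp add: card_insert_le_m1)
    qed
    then show ?thesis using sum_bounded_above[of "cut_edges E S" card "2::nat"] by simp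
  qed
  finally show ?thesis by simp
qed

lemma take_mem_iff:
  assumes "distinct bs" "j < length bs"
  shows "bs ! j \<in> set (take i bs) \<longleftrightarrow> j < i"
proof
  assume "bs ! j \<in> set (take i bs)"
  then obtain k where k: "k < length (take i bs)" "take i bs ! k = bs ! j"
    by (auto simp: in_set_conv_nth)
  then have "bs ! k = bs ! j" "k < length bs" "k < i" by auto
  then have "k = j" using assms nth_eq_iff_index_eq by blast
  then show "j < i" using \<open>k < i\<close> by simp
next
  assume "j < i"
  then have "take i bs ! j = bs ! j" "j < length (take i bs)" using assms by auto
  then show "bs ! j \<in> set (take i bs)" by (metis nth_mem)
qed


lemma BW_exists:
  assumes "finite_graph V E"
  shows "\<exists>bs. is_bubbling V bs"
  using finite_distinct_list[of V] assms unfolding finite_graph_def is_bubbling_def by auto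

lemma BW_attained:
  assumes "finite_graph V E"
  shows "\<exists>bs. is_bubbling V bs \<and> bubbling_width E bs = BW V E"
proof -
  obtain bs where "is_bubbling V bs" using BW_exists[OF assms] by blast
  then have "\<exists>k bs. is_bubbling V bs \<and> bubbling_width E bs = k" by blast
  then show ?thesis unfolding BW_def by (rule LeastI_ex)
qed

lemma PW_attained:
  assumes "finite_graph V E"
  shows "\<exists>ts. is_path_decomp V E ts \<and> path_decomp_width ts = PW V E"
proof -
  have "is_path_decomp V E [V]" using assms unfolding is_path_decomp_def finite_graph_def by auto
  then have "\<exists>k ts. is_path_decomp V E ts \<and> path_decomp_width ts = k" by blast
  then show ?thesis unfolding PW_def by (rule LeastI_ex)
qed

lemma PW_le:
  assumes "is_path_decomp V E ts"
  shows "PW V E \<le> path_decomp_width ts"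
  unfolding PW_def by (rule Least_le) (use assms in blast)

lemma BW_le:
  assumes "is_bubbling V bs"
  shows "BW V E \<le> bubbling_width E bs"
  unfolding BW_def by (rule Least_le) (use assms in blast)

lemma partA:
  assumes G: "finite_graph V E"
  shows "PW V E \<le> 2 * BW V E"
proof -
  obtain bs where bs: "is_bubbling V bs" "bubbling_width E bs = BW V E"
    using BW_attained[OF G] by blast
  define n where "n = length bs"
  define S where "S i = set (take i bs)" for i
  define X where "X i = \<Union>(cut_edges E (S i))" for i
  define ts where "ts = map X [0..<Suc n]"
  have len: "length ts = Suc n" unfolding ts_def by simp
  have tsn: "ts ! i = X i" if "i < Suc n" for i using that unfolding ts_def
    by (simp del: upt_Suc)
  have Smono: "S i \<subseteq> S j" if "i \<le> j" for i j
    unfolding S_def using that by (metis set_take_subset_set_take)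
  have memX: "v \<in> X i \<longleftrightarrow> (\<exists>u. E v u \<and> (v \<in> S i \<longleftrightarrow> u \<notin> S i))" for v i
    unfolding X_def by (rule mem_cut_union[OF G])
  have pd: "is_path_decomp V E ts"
    unfolding is_path_decomp_def
  proof (intro conjI allI impI ballI)
    show "ts \<noteq> []" using len by auto
  next
    fix t assume "t \<in> set ts"
    then obtain i where "t = X i" unfolding ts_def by auto
    then show "t \<subseteq> V" using memX G unfolding finite_graph_def by auto
  next
    fix v w assume vw: "E v w"
    have "v \<in> set bs" "w \<in> set bs" using vw G bs(1) unfolding finite_graph_def is_bubbling_def
      by auto
    then obtain a b where ab: "a < n" "b < n" "bs ! a = v" "bs ! b = w"
      unfolding n_def by (auto simp: in_set_conv_nth)
    have ne: "v \<noteq> w" using vw G unfolding finite_graph_def by auto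
    have dist: "distinct bs" using bs(1) unfolding is_bubbling_def by simp
    have Sm: "x \<in> S i \<longleftrightarrow> c < i" if "c < n" "bs ! c = x" for c x i
      using take_mem_iff[OF dist, of c i] that unfolding S_def n_def by simp
    have wv: "E w v" using vw G unfolding finite_graph_def by auto
    show "\<exists>t\<in>set ts. v \<in> t \<and> w \<in> t"
    proof (cases "a < b")
      case True
      have "v \<in> S (Suc a)" "w \<notin> S (Suc a)" using Sm[OF ab(1) ab(3)] Sm[OF ab(2) ab(4)] True by auto
      then have "v \<in> X (Suc a)" "w \<in> X (Suc a)" using memX vw wv by blast+
      moreover have "X (Suc a) \<in> set ts" using tsn[of "Suc a"] len ab
        by (metis Suc_mono nth_mem)
      ultimately show ?thesis by blast
    next
      case False
      then have "b < a" using ab ne by (metis linorder_neqE_nat)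
      have "w \<in> S (Suc b)" "v \<notin> S (Suc b)" using Sm[OF ab(1) ab(3)] Sm[OF ab(2) ab(4)] \<open>b < a\<close> by auto
      then have "v \<in> X (Suc b)" "w \<in> X (Suc b)" using memX vw wv by blast+
      moreover have "X (Suc b) \<in> set ts" using tsn[of "Suc b"] len ab
        by (metis Suc_mono nth_mem)
      ultimately show ?thesis by blast
    qed
  next
    fix v i j k assume h: "i \<le> j \<and> j \<le> k \<and> k < length ts \<and> v \<in> ts ! i \<and> v \<in> ts ! k"
    then have vi: "v \<in> X i" and vk: "v \<in> X k" using tsn len by auto
    have "v \<in> X j"
    proof (cases "v \<in> S j")
      case True
      then have "v \<in> S k" using Smono h by blast
      then obtain u where "E v u" "u \<notin> S k" using vk memX by blast
      then show ?thesis using memX True Smono h by blast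
    next
      case False
      then have "v \<notin> S i" using Smono h by blast
      then obtain u where "E v u" "u \<in> S i" using vi memX by blast
      then show ?thesis using memX False Smono h by blast
    qed
    then show "v \<in> ts ! j" using tsn len h by auto
  qed
  have bw: "card (cut_edges E (S i)) \<le> BW V E" if "i \<le> n" for i
  proof -
    have "card (cut_edges E (S i)) \<in> (\<lambda>i. card (cut_edges E (set (take i bs)))) ` {0..length bs}"
      using that unfolding S_def n_def by auto
    then have "card (cut_edges E (S i)) \<le> bubbling_width E bs"
      unfolding bubbling_width_def by (intro Max_ge) auto
    then show ?thesis using bs(2) by simp
  qed
  have "path_decomp_width ts \<le> 2 * BW V E"
    unfolding path_decomp_width_def
  proof (rule Max.boundedI)
    show "finite (card ` set ts)" by simp
    show "card ` set ts \<noteq> {}" using len by auto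
  next
    fix c assume "c \<in> card ` set ts"
    then obtain i where i: "i \<le> n" "c = card (X i)" unfolding ts_def by (auto simp del: upt_Suc simp: less_Suc_eq_le)
    have "card (X i) \<le> 2 * card (cut_edges E (S i))" unfolding X_def by (rule card_union_cut[OF G])
    then show "c \<le> 2 * BW V E" using bw[OF i(1)] i(2) by linarith
  qed
  then show ?thesis using PW_le[OF pd] by linarith
qed


lemma cut_split:
  assumes G: "finite_graph V E" and e: "e \<in> cut_edges E S"
  shows "\<exists>u v. e = {u,v} \<and> E u v \<and> u \<in> S \<and> v \<notin> S"
proof -
  obtain a b where ab: "e = {a,b}" "E a b" "card ({a,b} \<inter> S) = 1"
    using e unfolding cut_edges_def graph_edges_def by blast
  have ne: "a \<noteq> b" using ab(2) G unfolding finite_graph_def by auto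
  have ba: "E b a" using ab(2) G unfolding finite_graph_def by auto
  show ?thesis
  proof (cases "a \<in> S")
    case True
    then have "b \<notin> S" using ab(3) ne by (cases "b \<in> S") auto
    then show ?thesis using ab True by blast
  next
    case False
    then have "b \<in> S" using ab(3) ne by (cases "b \<in> S") auto
    then show ?thesis using ab ba False by (metis insert_commute)
  qed
qed

lemma partB:
  assumes G: "finite_graph V E" and deg: "\<forall>v \<in> V. degree E v \<le> d"
  shows "BW V E \<le> d * PW V E"
proof -
  obtain ts where ts: "is_path_decomp V E ts" "path_decomp_width ts = PW V E"
    using PW_attained[OF G] by blast
  define L where "L = length ts"
  define cov where "cov v = (\<exists>t<L. v \<in> ts ! t)" for v
  define f where "f v = (if cov v then LEAST t. t < L \<and> v \<in> ts ! t else L)" for v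
  have fcov: "f v < L \<and> v \<in> ts ! (f v) \<and> (\<forall>s<L. v \<in> ts ! s \<longrightarrow> f v \<le> s)" if "cov v" for v
  proof -
    have ex: "\<exists>t. t < L \<and> v \<in> ts ! t" using that unfolding cov_def by blast
    have "f v = (LEAST t. t < L \<and> v \<in> ts ! t)" using that unfolding f_def by simp
    then show ?thesis using LeastI_ex[OF ex] Least_le[of "\<lambda>t. t < L \<and> v \<in> ts ! t"] by auto
  qed
  have fnc: "f v = L" if "\<not> cov v" for v using that unfolding f_def by simp
  have edge_bag: "\<exists>s<L. u \<in> ts ! s \<and> v \<in> ts ! s" if euv: "E u v" for u v
  proof -
    have "\<forall>v w. E v w \<longrightarrow> (\<exists>t \<in> set ts. v \<in> t \<and> w \<in> t)"
      using ts(1) unfolding is_path_decomp_def by (elim conjE)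
    then obtain t where "t \<in> set ts" "u \<in> t" "v \<in> t" using euv by blast
    then show ?thesis unfolding L_def by (metis in_set_conv_nth)
  qed
  have interval: "v \<in> ts ! j" if "i \<le> j" "j \<le> k" "k < L" "v \<in> ts ! i" "v \<in> ts ! k" for v i j k
    using ts(1) that unfolding is_path_decomp_def L_def by blast
  have bagV: "ts ! t \<subseteq> V" if "t < L" for t
    using ts(1) that unfolding is_path_decomp_def L_def by (meson nth_mem)
  have bagcard: "card (ts ! t) \<le> PW V E" if "t < L" for t
  proof -
    have "card (ts ! t) \<in> card ` set ts" using that unfolding L_def by simp
    then have "card (ts ! t) \<le> Max (card ` set ts)" by (intro Max_ge) auto
    then show ?thesis using ts(2) unfolding path_decomp_width_def by simp
  qed
  have finV: "finite V" using G unfolding finite_graph_def by simp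
  obtain xs where xs: "set xs = V" "distinct xs" using finite_distinct_list[OF finV] by blast
  define bs where "bs = sort_key f xs"
  have bsb: "is_bubbling V bs" unfolding bs_def is_bubbling_def using xs by simp
  have dist: "distinct bs" unfolding bs_def using xs by simp
  define n where "n = length bs"
  have mono: "f (bs ! k) \<le> f (bs ! j)" if "k \<le> j" "j < n" for k j
  proof -
    have "sorted (map f bs)" unfolding bs_def by simp
    then have "map f bs ! k \<le> map f bs ! j" using that unfolding n_def
      by (intro sorted_nth_mono) auto
    then show ?thesis using that unfolding n_def by simp
  qed
  have setbs: "set bs = V" using bsb unfolding is_bubbling_def by simp
  have cutb: "card (cut_edges E (set (take i bs))) \<le> d * PW V E" if "i \<le> n" for i
  proof (cases "i = 0")
    case True
    then have "cut_edges E (set (take i bs)) = {}" unfolding cut_edges_def by simp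
    then show ?thesis by simp
  next
    case False
    define S where "S = set (take i bs)"
    define x where "x = bs ! (i - 1)"
    define t where "t = f x"
    define img where "img u = (\<lambda>w. {u,w}) ` {w. E u w}" for u
    have key: "cov x \<and> e \<in> (\<Union>u\<in>ts ! t. img u)" if e: "e \<in> cut_edges E S" for e
    proof -
      obtain u v where uv: "e = {u,v}" "E u v" "u \<in> S" "v \<notin> S"
        using cut_split[OF G e] by blast
      have "\<forall>v w. E v w \<longrightarrow> v \<in> V \<and> w \<in> V" using G unfolding finite_graph_def by (elim conjE)
      then have "u \<in> set bs" "v \<in> set bs" using uv(2) setbs by blast+
      then obtain k j where kj: "k < n" "bs ! k = u" "j < n" "bs ! j = v"
        unfolding n_def by (auto simp: in_set_conv_nth)
      have "k < i" using take_mem_iff[OF dist, of k i] kj uv(3) unfolding S_def n_def by simp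
      have "\<not> j < i" using take_mem_iff[OF dist, of j i] kj uv(4) unfolding S_def n_def by simp
      have fu: "f u \<le> t" using mono[of k "i - 1"] kj \<open>k < i\<close> that \<open>i \<le> n\<close> unfolding t_def x_def
        by auto
      have fv: "t \<le> f v" using mono[of "i - 1" j] kj \<open>\<not> j < i\<close> unfolding t_def x_def by auto
      obtain s where s: "s < L" "u \<in> ts ! s" "v \<in> ts ! s" using edge_bag[OF uv(2)] by blast
      have cu: "cov u" "cov v" using s unfolding cov_def by blast+
      have "f v \<le> s" using fcov[OF cu(2)] s by blast
      have "cov x"
      proof (rule ccontr)
        assume "\<not> cov x"
        then have "t = L" unfolding t_def using fnc by simp
        then show False using fv fcov[OF cu(2)] by simp
      qed
      have "u \<in> ts ! t"
        using interval[of "f u" t s u] fu fv \<open>f v \<le> s\<close> s fcov[OF cu(1)] by simp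
      moreover have "e \<in> img u" unfolding img_def using uv by blast
      ultimately show ?thesis using \<open>cov x\<close> by blast
    qed
    show ?thesis
    proof (cases "cov x")
      case False
      then have "cut_edges E S = {}" using key by blast
      then show ?thesis unfolding S_def by simp
    next
      case True
      have tL: "t < L" using fcov[OF True] unfolding t_def by simp
      have finB: "finite (ts ! t)" using bagV[OF tL] finV finite_subset by blast
      have sub: "cut_edges E S \<subseteq> (\<Union>u\<in>ts ! t. img u)" using key by blast
      have "card (cut_edges E S) \<le> card (\<Union>u\<in>ts ! t. img u)"
      proof (rule card_mono)
        have "finite (img u)" if "u \<in> ts ! t" for u
        proof -
          have "{w. E u w} \<subseteq> V" using G unfolding finite_graph_def by blast
          then have "finite {w. E u w}" using finV finite_subset by blast
          then show ?thesis unfolding img_def by simp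
        qed
        then show "finite (\<Union>u\<in>ts ! t. img u)" using finB by blast
        show "cut_edges E S \<subseteq> (\<Union>u\<in>ts ! t. img u)" by (rule sub)
      qed
      also have "\<dots> \<le> (\<Sum>u\<in>ts ! t. card (img u))" by (rule card_UN_le[OF finB])
      also have "\<dots> \<le> card (ts ! t) * d"
      proof -
        have "card (img u) \<le> d" if "u \<in> ts ! t" for u
        proof -
          have uV: "u \<in> V" using that bagV[OF tL] by blast
          have "finite {w. E u w}" using G finV unfolding finite_graph_def
            by (metis (mono_tags, lifting) finite_subset mem_Collect_eq subsetI)
          then have "card (img u) \<le> card {w. E u w}" unfolding img_def by (rule card_image_le)
          also have "\<dots> \<le> d" using deg uV unfolding degree_def by simp
          finally show ?thesis .
        qed
        then show ?thesis using sum_bounded_above[of "ts ! t" "\<lambda>u. card (img u)" d] by simp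
      qed
      also have "\<dots> \<le> PW V E * d" using bagcard[OF tL] by simp
      finally show ?thesis unfolding S_def by (simp add: mult.commute)
    qed
  qed
  have "bubbling_width E bs \<le> d * PW V E"
    unfolding bubbling_width_def
    by (rule Max.boundedI) (use cutb in \<open>auto simp: n_def\<close>)
  then show ?thesis using BW_le[OF bsb, of E] by linarith
qed

theorem lemma2:
  fixes V :: "'a set" and E :: "'a \<Rightarrow> 'a \<Rightarrow> bool" and d :: nat
  assumes "finite_graph V E"
    and "\<forall>v \<in> V. degree E v \<le> d"
  shows "real (PW V E) / 2 \<le> real (BW V E) \<and> BW V E \<le> d * PW V E"
proof
  have "PW V E \<le> 2 * BW V E" by (rule partA[OF assms(1)])
  then show "real (PW V E) / 2 \<le> real (BW V E)" by linarith
  show "BW V E \<le> d * PW V E" by (rule partB[OF assms])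
qed

end
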